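(* Let $G=(V,E)$ be a finite graph and let $M_1,M_2$ be perfect matchings of its dart graph $\mathcal D(G)$. Then the set $(M_1\triangle M_2)\cap E^E_{\mathcal D}$, viewed as a subset of $E$, is a closed curve on $G$.
   Context: A closed curve on $G$ is a subset $C\subseteq E$ such that every vertex of $G$ is incident with an even number of edges of $C$. The dart graph $\mathcal D(G)$ has vertex set $V_{\mathcal D}(G)=\{(v,e)\in V\times E: v\text{ incident with }e\}$, two distinct darts $(v,e),(v',e')$ being adjacent iff $v=v'$ or $e=e'$. $E^E_{\mathcal D}$ is the set of edges of $\mathcal D(G)$ of the form $\{(x,e),(y,e)\}$; it is identified with $E$ via $e\leftrightarrow\{(x,e),(y,e)\}$. A perfect matching of a graph is a set of its edges such that each vertex is incident with exactly one of them. *)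

theory Defs
  imports Main
begin

definition finite_graph :: "'v set \<Rightarrow> 'e set \<Rightarrow> ('v \<Rightarrow> 'e \<Rightarrow> bool) \<Rightarrow> bool" where
  "finite_graph V E inc \<longleftrightarrow> finite V \<and> finite E \<and>
     (\<forall>e\<in>E. card {v\<in>V. inc v e} = 2)"

definition closed_curve :: "'v set \<Rightarrow> 'e set \<Rightarrow> ('v \<Rightarrow> 'e \<Rightarrow> bool) \<Rightarrow> 'e set \<Rightarrow> bool" where
  "closed_curve V E inc C \<longleftrightarrow> C \<subseteq> E \<and> (\<forall>v\<in>V. even (card {e\<in>C. inc v e}))"

definition darts :: "'v set \<Rightarrow> 'e set \<Rightarrow> ('v \<Rightarrow> 'e \<Rightarrow> bool) \<Rightarrow> ('v \<times> 'e) set" where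
  "darts V E inc = {(v, e). v \<in> V \<and> e \<in> E \<and> inc v e}"

definition dart_edges :: "'v set \<Rightarrow> 'e set \<Rightarrow> ('v \<Rightarrow> 'e \<Rightarrow> bool) \<Rightarrow> ('v \<times> 'e) set set" where
  "dart_edges V E inc = {{d1, d2} | d1 d2. d1 \<in> darts V E inc \<and> d2 \<in> darts V E inc \<and> d1 \<noteq> d2
      \<and> (fst d1 = fst d2 \<or> snd d1 = snd d2)}"

definition dart_edge_edges :: "'v set \<Rightarrow> 'e set \<Rightarrow> ('v \<Rightarrow> 'e \<Rightarrow> bool) \<Rightarrow> ('v \<times> 'e) set set" where
  "dart_edge_edges V E inc = {{d1, d2} | d1 d2. d1 \<in> darts V E inc \<and> d2 \<in> darts V E inc \<and> d1 \<noteq> d2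
      \<and> snd d1 = snd d2}"

text \<open>Identification of E^E_D with E: the dart-graph edge {(x,e),(y,e)} corresponds to e.\<close>
definition edge_of_dart_edge :: "('v \<times> 'e) set \<Rightarrow> 'e" where
  "edge_of_dart_edge m = snd (SOME d. d \<in> m)"

definition perfect_matching :: "'a set \<Rightarrow> 'a set set \<Rightarrow> 'a set set \<Rightarrow> bool" where
  "perfect_matching VV EE M \<longleftrightarrow> M \<subseteq> EE \<and> (\<forall>x\<in>VV. \<exists>!m. m \<in> M \<and> x \<in> m)"

end

theory Submission
  imports Defs
begin

lemma two_pt:
  assumes "card S = 2" "v \<in> S" "u \<in> S" "u' \<in> S" "u \<noteq> v" "u' \<noteq> v"
  shows "u = u'"
proof -
  from assms(1) obtain a b where "S = {a, b}" "a \<noteq> b" by (auto simp: card_2_iff)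
  with assms show ?thesis by auto
qed

lemma darts_finite: "finite_graph V E inc \<Longrightarrow> finite (darts V E inc)"
proof -
  assume "finite_graph V E inc"
  then have "finite (V \<times> E)" by (simp add: finite_graph_def)
  moreover have "darts V E inc \<subseteq> V \<times> E" by (auto simp: darts_def)
  ultimately show ?thesis by (rule finite_subset[rotated])
qed

lemma pm_unique:
  assumes "perfect_matching (darts V E inc) (dart_edges V E inc) M"
    "m \<in> M" "m' \<in> M" "x \<in> m" "x \<in> m'"
  shows "m = m'"
proof -
  have "M \<subseteq> dart_edges V E inc" using assms(1) by (simp add: perfect_matching_def)
  then have "m \<subseteq> darts V E inc" using assms(2) by (auto simp: dart_edges_def)
  then have "x \<in> darts V E inc" using assms(4) by auto
  then show ?thesis using assms(1,2,3,4,5) unfolding perfect_matching_def by blast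
qed

lemma parity:
  assumes fg: "finite_graph V E inc"
    and pm: "perfect_matching (darts V E inc) (dart_edges V E inc) M"
  shows "even (card {d \<in> darts V E inc. fst d = v \<and> (\<exists>m\<in>M. d \<in> m \<and> (\<forall>x\<in>m. fst x = v))})"
proof -
  let ?P = "{d \<in> darts V E inc. fst d = v \<and> (\<exists>m\<in>M. d \<in> m \<and> (\<forall>x\<in>m. fst x = v))}"
  let ?C = "{m \<in> M. \<forall>x\<in>m. fst x = v}"
  have Msub: "M \<subseteq> dart_edges V E inc" using pm by (simp add: perfect_matching_def)
  have mdarts: "m \<subseteq> darts V E inc" if "m \<in> M" for m
    using Msub that by (auto simp: dart_edges_def)
  have eq: "?P = \<Union>?C"
  proof
    show "?P \<subseteq> \<Union>?C" by blast
    show "\<Union>?C \<subseteq> ?P"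
    proof
      fix d assume "d \<in> \<Union>?C"
      then obtain m where "m \<in> M" "d \<in> m" "\<forall>x\<in>m. fst x = v" by blast
      then show "d \<in> ?P" using mdarts by blast
    qed
  qed
  have fd: "finite (darts V E inc)" using fg by (rule darts_finite)
  have finM: "finite M"
  proof -
    have "dart_edges V E inc \<subseteq> Pow (darts V E inc)" by (auto simp: dart_edges_def)
    then show ?thesis using Msub fd by (meson finite_Pow_iff finite_subset subset_trans)
  qed
  have c2: "card m = 2" if "m \<in> M" for m
    using Msub that by (auto simp: dart_edges_def)
  have "card (\<Union>?C) = sum card ?C"
  proof (rule card_Union_disjoint)
    show "pairwise disjnt ?C"
      unfolding pairwise_def disjnt_def using pm_unique[OF pm] by blast
    show "finite A" if "A \<in> ?C" for A using that mdarts fd finite_subset by blast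
  qed
  also have "\<dots> = sum (\<lambda>_. 2) ?C" using c2 by simp
  also have "\<dots> = 2 * card ?C" by simp
  finally show ?thesis using eq by simp
qed

lemma edge_of_pair: "edge_of_dart_edge {(x, e), (y, e)} = e"
  unfolding edge_of_dart_edge_def by (rule someI2[of _ "(x,e)"]) auto

lemma ee_struct:
  assumes "m \<in> dart_edge_edges V E inc"
  shows "\<exists>x y e. m = {(x,e),(y,e)} \<and> x \<noteq> y \<and> x \<in> V \<and> y \<in> V \<and> e \<in> E \<and> inc x e \<and> inc y e"
  using assms unfolding dart_edge_edges_def darts_def by fastforce

lemma split_md:
  assumes pm: "perfect_matching (darts V E inc) (dart_edges V E inc) M"
    and "m \<in> M" "(v,e) \<in> m" "\<not> (\<forall>x\<in>m. fst x = v)"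
  shows "m \<in> dart_edge_edges V E inc"
proof -
  have "m \<in> dart_edges V E inc" using pm assms(2) by (auto simp: perfect_matching_def)
  then obtain d1 d2 where m: "m = {d1,d2}" "d1 \<in> darts V E inc" "d2 \<in> darts V E inc" "d1 \<noteq> d2"
    "fst d1 = fst d2 \<or> snd d1 = snd d2" unfolding dart_edges_def by blast
  have "snd d1 = snd d2" using m assms(3,4) by auto
  then show ?thesis using m unfolding dart_edge_edges_def by blast
qed

lemma ee_unique:
  assumes fg: "finite_graph V E inc" and "m \<in> dart_edge_edges V E inc" "m' \<in> dart_edge_edges V E inc"
    "(v,e) \<in> m" "(v,e) \<in> m'"
  shows "m = m'"
proof -
  obtain x y e1 where a: "m = {(x,e1),(y,e1)}" "x \<noteq> y" "x \<in> V" "y \<in> V" "e1 \<in> E" "inc x e1" "inc y e1"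
    using ee_struct[OF assms(2)] by blast
  obtain x' y' e2 where b: "m' = {(x',e2),(y',e2)}" "x' \<noteq> y'" "x' \<in> V" "y' \<in> V" "e2 \<in> E" "inc x' e2" "inc y' e2"
    using ee_struct[OF assms(3)] by blast
  have e: "e1 = e" "e2 = e" using a(1) b(1) assms(4,5) by auto
  have c: "card {w\<in>V. inc w e} = 2" using fg a(5) e by (simp add: finite_graph_def)
  obtain u where u: "m = {(v,e),(u,e)}" "u \<noteq> v" "u \<in> V" "inc u e"
    using a e assms(4) by (metis empty_iff insertE insert_commute prod.inject)
  obtain u' where u': "m' = {(v,e),(u',e)}" "u' \<noteq> v" "u' \<in> V" "inc u' e"
    using b e assms(5) by (metis empty_iff insertE insert_commute prod.inject)
  have "v \<in> V" "inc v e" using a e assms(4) by auto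
  then have "u = u'" using two_pt[OF c] u u' by blast
  then show ?thesis using u u' by simp
qed

lemma dir1:
  assumes fg: "finite_graph V E inc"
    and pa: "perfect_matching (darts V E inc) (dart_edges V E inc) Ma"
    and pb: "perfect_matching (darts V E inc) (dart_edges V E inc) Mb"
    and v: "v \<in> V"
    and m: "m \<in> Ma" "m \<notin> Mb" "m \<in> dart_edge_edges V E inc"
    and i: "inc v (edge_of_dart_edge m)"
  shows "(v, edge_of_dart_edge m) \<in> {d \<in> darts V E inc. fst d = v \<and> \<not>(\<exists>m\<in>Ma. d \<in> m \<and> (\<forall>x\<in>m. fst x = v))}
     - {d \<in> darts V E inc. fst d = v \<and> \<not>(\<exists>m\<in>Mb. d \<in> m \<and> (\<forall>x\<in>m. fst x = v))}"
proof -
  obtain x y e where a: "m = {(x,e),(y,e)}" "x \<noteq> y" "x \<in> V" "y \<in> V" "e \<in> E" "inc x e" "inc y e"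
    using ee_struct[OF m(3)] by blast
  have ed: "edge_of_dart_edge m = e" using a(1) edge_of_pair by simp
  have c: "card {w\<in>V. inc w e} = 2" using fg a(5) by (simp add: finite_graph_def)
  have vxy: "v = x \<or> v = y" using two_pt[OF c, of x y v] a v i ed by auto
  have vm: "(v,e) \<in> m" using vxy a by auto
  have nf: "\<not> (\<forall>z\<in>m. fst z = v)" using vxy a by auto
  have dd: "(v,e) \<in> darts V E inc" using v a(5) i ed by (simp add: darts_def)
  have n1: "\<not>(\<exists>m'\<in>Ma. (v,e) \<in> m' \<and> (\<forall>z\<in>m'. fst z = v))"
    using pm_unique[OF pa m(1) _ vm] nf by blast
  have "\<exists>m'\<in>Mb. (v,e) \<in> m' \<and> (\<forall>z\<in>m'. fst z = v)"
  proof (rule ccontr)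
    assume na: "\<not> ?thesis"
    obtain m2 where m2: "m2 \<in> Mb" "(v,e) \<in> m2" using pb dd unfolding perfect_matching_def by blast
    have "\<not> (\<forall>z\<in>m2. fst z = v)" using na m2 by blast
    then have "m2 \<in> dart_edge_edges V E inc" using split_md[OF pb m2] by blast
    then have "m2 = m" using ee_unique[OF fg _ m(3) m2(2) vm] by blast
    then show False using m2 m(2) by simp
  qed
  then show ?thesis using dd n1 ed by auto
qed

lemma dir2:
  assumes fg: "finite_graph V E inc"
    and pa: "perfect_matching (darts V E inc) (dart_edges V E inc) Ma"
    and pb: "perfect_matching (darts V E inc) (dart_edges V E inc) Mb"
    and d: "(v,e) \<in> {d \<in> darts V E inc. fst d = v \<and> \<not>(\<exists>m\<in>Ma. d \<in> m \<and> (\<forall>x\<in>m. fst x = v))}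
     - {d \<in> darts V E inc. fst d = v \<and> \<not>(\<exists>m\<in>Mb. d \<in> m \<and> (\<forall>x\<in>m. fst x = v))}"
  shows "\<exists>m. m \<in> Ma \<and> m \<notin> Mb \<and> m \<in> dart_edge_edges V E inc \<and> edge_of_dart_edge m = e"
proof -
  have dd: "(v,e) \<in> darts V E inc" using d by blast
  obtain m where m: "m \<in> Ma" "(v,e) \<in> m" using pa dd unfolding perfect_matching_def by blast
  have nf: "\<not> (\<forall>z\<in>m. fst z = v)" using d m by blast
  have mee: "m \<in> dart_edge_edges V E inc" using split_md[OF pa m nf] .
  obtain x y e1 where a: "m = {(x,e1),(y,e1)}" using ee_struct[OF mee] by blast
  have "e1 = e" using a m(2) by auto
  then have ed: "edge_of_dart_edge m = e" using a edge_of_pair by simp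
  obtain m' where m': "m' \<in> Mb" "(v,e) \<in> m'" "\<forall>z\<in>m'. fst z = v" using d dd by auto
  have "m \<notin> Mb"
  proof
    assume "m \<in> Mb"
    then have "m = m'" using pm_unique[OF pb _ m'(1) m(2) m'(2)] by blast
    then show False using nf m'(3) by simp
  qed
  then show ?thesis using m mee ed by blast
qed

theorem proposition2p5:
  fixes V :: "'v set" and E :: "'e set" and inc :: "'v \<Rightarrow> 'e \<Rightarrow> bool"
    and M1 M2 :: "('v \<times> 'e) set set"
  assumes "finite_graph V E inc"
    and "perfect_matching (darts V E inc) (dart_edges V E inc) M1"
    and "perfect_matching (darts V E inc) (dart_edges V E inc) M2"
  shows "closed_curve V E inc
           (edge_of_dart_edge ` (((M1 - M2) \<union> (M2 - M1)) \<inter> dart_edge_edges V E inc))"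
proof -
  let ?X = "((M1 - M2) \<union> (M2 - M1)) \<inter> dart_edge_edges V E inc"
  let ?C = "edge_of_dart_edge ` ?X"
  note fg = assms(1) and p1 = assms(2) and p2 = assms(3)
  have CE: "?C \<subseteq> E"
  proof
    fix e assume "e \<in> ?C"
    then obtain m where "m \<in> dart_edge_edges V E inc" "e = edge_of_dart_edge m" by blast
    then show "e \<in> E" using ee_struct edge_of_pair by metis
  qed
  have ev: "even (card {e\<in>?C. inc v e})" if v: "v \<in> V" for v
  proof -
    define D where "D = {d \<in> darts V E inc. fst d = v}"
    define P1 where "P1 = {d \<in> darts V E inc. fst d = v \<and> (\<exists>m\<in>M1. d \<in> m \<and> (\<forall>x\<in>m. fst x = v))}"
    define P2 where "P2 = {d \<in> darts V E inc. fst d = v \<and> (\<exists>m\<in>M2. d \<in> m \<and> (\<forall>x\<in>m. fst x = v))}"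
    define Q1 where "Q1 = {d \<in> darts V E inc. fst d = v \<and> \<not>(\<exists>m\<in>M1. d \<in> m \<and> (\<forall>x\<in>m. fst x = v))}"
    define Q2 where "Q2 = {d \<in> darts V E inc. fst d = v \<and> \<not>(\<exists>m\<in>M2. d \<in> m \<and> (\<forall>x\<in>m. fst x = v))}"
    have fD: "finite D" using darts_finite[OF fg] by (simp add: D_def)
    have eP1: "even (card P1)" using parity[OF fg p1] by (simp add: P1_def)
    have eP2: "even (card P2)" using parity[OF fg p2] by (simp add: P2_def)
    have Q1e: "Q1 = D - P1" and Q2e: "Q2 = D - P2" and PD: "P1 \<subseteq> D" "P2 \<subseteq> D"
      by (auto simp: Q1_def Q2_def D_def P1_def P2_def)
    have cQ1: "card Q1 + card P1 = card D"
    proof -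
      have "D = Q1 \<union> P1" "Q1 \<inter> P1 = {}" using Q1e PD by auto
      then show ?thesis using fD card_Un_disjoint[of Q1 P1] by (metis finite_Un)
    qed
    have cQ2: "card Q2 + card P2 = card D"
    proof -
      have "D = Q2 \<union> P2" "Q2 \<inter> P2 = {}" using Q2e PD by auto
      then show ?thesis using fD card_Un_disjoint[of Q2 P2] by (metis finite_Un)
    qed
    have fQ1: "finite Q1" "finite Q2" using fD Q1e Q2e by auto
    have a1: "card (Q1 - Q2) + card (Q1 \<inter> Q2) = card Q1"
    proof -
      have "Q1 = (Q1 - Q2) \<union> (Q1 \<inter> Q2)" "(Q1 - Q2) \<inter> (Q1 \<inter> Q2) = {}" by auto
      then show ?thesis using fQ1 card_Un_disjoint[of "Q1 - Q2" "Q1 \<inter> Q2"] by (metis finite_Un)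
    qed
    have a2: "card (Q2 - Q1) + card (Q1 \<inter> Q2) = card Q2"
    proof -
      have "Q2 = (Q2 - Q1) \<union> (Q1 \<inter> Q2)" "(Q2 - Q1) \<inter> (Q1 \<inter> Q2) = {}" by auto
      then show ?thesis using fQ1 card_Un_disjoint[of "Q2 - Q1" "Q1 \<inter> Q2"] by (metis finite_Un)
    qed
    have dis: "(Q1 - Q2) \<inter> (Q2 - Q1) = {}" by blast
    have cU: "card ((Q1 - Q2) \<union> (Q2 - Q1)) = card (Q1 - Q2) + card (Q2 - Q1)"
      using fQ1 dis by (simp add: card_Un_disjoint)
    have eU: "even (card ((Q1 - Q2) \<union> (Q2 - Q1)))"
    proof -
      have "card ((Q1 - Q2) \<union> (Q2 - Q1)) + 2 * card (Q1 \<inter> Q2) + card P1 + card P2 = 2 * card D"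
        using cU a1 a2 cQ1 cQ2 by simp
      then show ?thesis using eP1 eP2 by presburger
    qed
    have eqs: "{e\<in>?C. inc v e} = snd ` ((Q1 - Q2) \<union> (Q2 - Q1))"
    proof
      show "{e\<in>?C. inc v e} \<subseteq> snd ` ((Q1 - Q2) \<union> (Q2 - Q1))"
      proof
        fix e assume e: "e \<in> {e\<in>?C. inc v e}"
        then obtain m where m: "m \<in> ?X" "e = edge_of_dart_edge m" by blast
        show "e \<in> snd ` ((Q1 - Q2) \<union> (Q2 - Q1))"
        proof (cases "m \<in> M1")
          case True
          then have "(v, e) \<in> Q1 - Q2" using dir1[OF fg p1 p2 v, of m, folded Q1_def Q2_def] m e by blast
          then show ?thesis by force
        next
          case False
          then have "(v, e) \<in> Q2 - Q1" using dir1[OF fg p2 p1 v, of m, folded Q1_def Q2_def] m e by blast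
          then show ?thesis by force
        qed
      qed
      show "snd ` ((Q1 - Q2) \<union> (Q2 - Q1)) \<subseteq> {e\<in>?C. inc v e}"
      proof
        fix e assume "e \<in> snd ` ((Q1 - Q2) \<union> (Q2 - Q1))"
        then obtain d where d: "d \<in> (Q1 - Q2) \<union> (Q2 - Q1)" "e = snd d" by blast
        have dv: "d = (v, e)" using d by (cases d) (auto simp: Q1_def Q2_def)
        have "d \<in> D" using d Q1e Q2e by blast
        then have ie: "inc v e" using dv by (simp add: D_def darts_def)
        show "e \<in> {e\<in>?C. inc v e}"
        proof (cases "d \<in> Q1 - Q2")
          case True
          then obtain m where "m \<in> M1 \<and> m \<notin> M2 \<and> m \<in> dart_edge_edges V E inc \<and> edge_of_dart_edge m = e"
            using dir2[OF fg p1 p2, of v e, folded Q1_def Q2_def] dv True by blast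
          then show ?thesis using ie by blast
        next
          case False
          then have "d \<in> Q2 - Q1" using d by blast
          then obtain m where "m \<in> M2 \<and> m \<notin> M1 \<and> m \<in> dart_edge_edges V E inc \<and> edge_of_dart_edge m = e"
            using dir2[OF fg p2 p1, of v e, folded Q1_def Q2_def] dv \<open>d \<in> Q2 - Q1\<close> by blast
          then show ?thesis using ie by blast
        qed
      qed
    qed
    have inj: "inj_on snd ((Q1 - Q2) \<union> (Q2 - Q1))"
      by (rule inj_onI) (auto simp: Q1_def Q2_def prod_eq_iff)
    show ?thesis using eqs card_image[OF inj] eU by simp
  qed
  show ?thesis unfolding closed_curve_def using CE ev by blast
qed

end
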